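(* Let $\mathfrak a=\mathbb H^p=\mathbb H_1\oplus\dots\oplus\mathbb H_p$, let $\mathfrak z$ be a $3$-dimensional real vector space, and let $A_s:\mathfrak z\to\mathrm{Im}\,\mathbb H$ ($s=1,\dots,p$) be linear isomorphisms; set $J_Z=\mathrm{diag}(L_{A_1Z},\dots,L_{A_pZ})$ and $V=\{J_Z:Z\in\mathfrak z\}$, equipped with an inner product. Let $N\in\mathcal N(V)$ and let $\phi_N:\mathfrak z\to\mathfrak z$ be defined by $N^{-1}J_ZN=J_{\phi_NZ}$. Let $N_{rs}$ denote the $4\times4$ block of $N$ mapping $\mathbb H_s$ to $\mathbb H_r$. If $N_{rs}\neq0$ for some $r,s$, then there exist $w_{rs},w'_{rs}\in\mathbb H$ with $\|w_{rs}\|=1$ and $w'_{rs}\neq0$ such that $N_{rs}=L_{w_{rs}}R_{w'_{rs}}$; moreover $w_{rs}^{-1}(A_rZ)w_{rs}=A_s(\phi_NZ)$ for all $Z\in\mathfrak z$, and $\det(A_sA_r^{-1})=\det(\phi_N)\in\{\pm1\}$, where the determinant of $A_sA_r^{-1}:\mathrm{Im}\,\mathbb H\to\mathrm{Im}\,\mathbb H$ is taken in a fixed basis.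
   Context: $\mathbb H$ denotes the quaternions with standard inner product, $L_q,R_q$ left and right multiplication by $q$. The orthogonal normalizer is $\mathcal N(V)=\{N\in O(\mathfrak a): NVN^{-1}\subset V$ and $K\mapsto NKN^{-1}$ is an orthogonal map of $V$ with respect to its inner product$\}$. The map $\phi_N$ is orthogonal both for the inner product on $\mathfrak z$ pulled back from $V$ and for the one pulled back from the trace form on $\mathfrak{so}(\mathfrak a)$. *)

theory Defs
  imports "HOL-Analysis.Analysis"
begin

text \<open>Quaternions H are modelled as real^4 (coordinates 1,i,j,k), with the standard
Euclidean inner product and the Hamilton product.\<close>

type_synonym quat = "real^4"

definition qmult :: "quat \<Rightarrow> quat \<Rightarrow> quat" where
  "qmult x y = vector
     [x$1*y$1 - x$2*y$2 - x$3*y$3 - x$4*y$4,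
      x$1*y$2 + x$2*y$1 + x$3*y$4 - x$4*y$3,
      x$1*y$3 - x$2*y$4 + x$3*y$1 + x$4*y$2,
      x$1*y$4 + x$2*y$3 - x$3*y$2 + x$4*y$1]"

definition qconj :: "quat \<Rightarrow> quat" where
  "qconj x = vector [x$1, - x$2, - x$3, - x$4]"

definition qinv :: "quat \<Rightarrow> quat" where
  "qinv x = (1 / (norm x)\<^sup>2) *\<^sub>R qconj x"

definition ImH :: "quat set" where
  "ImH = {q. q$1 = 0}"

definition imvec :: "quat \<Rightarrow> real^3" where
  "imvec q = vector [q$2, q$3, q$4]"

definition imquat :: "real^3 \<Rightarrow> quat" where
  "imquat v = vector [0, v$1, v$2, v$3]"

definition Jmap :: "('p \<Rightarrow> real^3 \<Rightarrow> quat) \<Rightarrow> real^3 \<Rightarrow> quat^'p \<Rightarrow> quat^'p" where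
  "Jmap A Z x = (\<chi> s. qmult (A s Z) (x$s))"

definition Jspace :: "('p \<Rightarrow> real^3 \<Rightarrow> quat) \<Rightarrow> (quat^'p \<Rightarrow> quat^'p) set" where
  "Jspace A = range (Jmap A)"

definition block :: "(quat^'p \<Rightarrow> quat^'p) \<Rightarrow> 'p \<Rightarrow> 'p \<Rightarrow> quat \<Rightarrow> quat" where
  "block N r s q = N (\<chi> t. if t = s then q else 0) $ r"

definition orth_normalizer ::
  "('p \<Rightarrow> real^3 \<Rightarrow> quat) \<Rightarrow> ((quat^'p \<Rightarrow> quat^'p) \<Rightarrow> (quat^'p \<Rightarrow> quat^'p) \<Rightarrow> real)
   \<Rightarrow> (quat^'p \<Rightarrow> quat^'p) set" where
  "orth_normalizer A g = {N. orthogonal_transformation N \<and>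
      (\<forall>K\<in>Jspace A. N \<circ> K \<circ> inv N \<in> Jspace A) \<and>
      (\<forall>K\<in>Jspace A. \<forall>K'\<in>Jspace A. g (N \<circ> K \<circ> inv N) (N \<circ> K' \<circ> inv N) = g K K')}"

end

theory Submission
  imports Defs
begin


lemma v4 [simp]:
 "(vector [a,b,c,d] ::('a::zero)^4)$1 = a"
 "(vector [a,b,c,d] ::('a::zero)^4)$2 = b"
 "(vector [a,b,c,d] ::('a::zero)^4)$3 = c"
 "(vector [a,b,c,d] ::('a::zero)^4)$4 = d"
  unfolding vector_def by simp_all

lemma quat_eq_iff: "(x::quat) = y \<longleftrightarrow> x$1=y$1 \<and> x$2=y$2 \<and> x$3=y$3 \<and> x$4=y$4"
  by (simp add: vec_eq_iff forall_4)

lemma qmult_nth [simp]: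
  "qmult x y $1 = x$1*y$1 - x$2*y$2 - x$3*y$3 - x$4*y$4"
  "qmult x y $2 = x$1*y$2 + x$2*y$1 + x$3*y$4 - x$4*y$3"
  "qmult x y $3 = x$1*y$3 - x$2*y$4 + x$3*y$1 + x$4*y$2"
  "qmult x y $4 = x$1*y$4 + x$2*y$3 - x$3*y$2 + x$4*y$1"
  by (simp_all add: qmult_def)

lemma qconj_nth [simp]:
  "qconj x $1 = x$1" "qconj x $2 = - x$2" "qconj x $3 = - x$3" "qconj x $4 = - x$4"
  by (simp_all add: qconj_def)

lemma qmult_assoc: "qmult (qmult a b) c = qmult a (qmult b c)"
  by (simp add: quat_eq_iff algebra_simps)

lemma qmult_add_left: "qmult (a + b) c = qmult a c + qmult b c"
  by (simp add: quat_eq_iff algebra_simps)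
lemma qmult_add_right: "qmult c (a + b) = qmult c a + qmult c b"
  by (simp add: quat_eq_iff algebra_simps)
lemma qmult_diff_left: "qmult (a - b) c = qmult a c - qmult b c"
  by (simp add: quat_eq_iff algebra_simps)
lemma qmult_diff_right: "qmult c (a - b) = qmult c a - qmult c b"
  by (simp add: quat_eq_iff algebra_simps)
lemma qmult_scale_left: "qmult (t *\<^sub>R a) c = t *\<^sub>R qmult a c"
  by (simp add: quat_eq_iff algebra_simps)
lemma qmult_scale_right: "qmult c (t *\<^sub>R a) = t *\<^sub>R qmult c a"
  by (simp add: quat_eq_iff algebra_simps)
lemma qmult_neg_left: "qmult (- a) c = - qmult a c"
  by (simp add: quat_eq_iff algebra_simps)
lemma qmult_neg_right: "qmult c (- a) = - qmult c a"
  by (simp add: quat_eq_iff algebra_simps)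
lemma qmult_zero [simp]: "qmult 0 c = 0" "qmult c 0 = 0"
  by (simp_all add: quat_eq_iff)

lemmas qmult_lin = qmult_add_left qmult_add_right qmult_diff_left qmult_diff_right
  qmult_scale_left qmult_scale_right qmult_neg_left qmult_neg_right

lemma norm_quat_sq: "(norm (x::quat))^2 = x$1^2 + x$2^2 + x$3^2 + x$4^2"
  unfolding power2_norm_eq_inner by (simp add: inner_vec_def sum_4 power2_eq_square)

lemma qmult_conj_right: "qmult x (qconj x) = (norm x)^2 *\<^sub>R vector [1,0,0,0]"
  unfolding norm_quat_sq by (simp add: quat_eq_iff algebra_simps power2_eq_square)
lemma qmult_conj_left: "qmult (qconj x) x = (norm x)^2 *\<^sub>R vector [1,0,0,0]"
  unfolding norm_quat_sq by (simp add: quat_eq_iff algebra_simps power2_eq_square)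

definition "q1 = (vector [1,0,0,0] :: quat)"
definition "qi = (vector [0,1,0,0] :: quat)"
definition "qj = (vector [0,0,1,0] :: quat)"
definition "qk = (vector [0,0,0,1] :: quat)"

lemma qone [simp]: "qmult q1 x = x" "qmult x q1 = x"
  by (simp_all add: quat_eq_iff q1_def)

lemma qinv_right: "x \<noteq> 0 \<Longrightarrow> qmult x (qinv x) = q1"
  by (simp add: qinv_def qmult_scale_right qmult_conj_right q1_def)
lemma qinv_left: "x \<noteq> 0 \<Longrightarrow> qmult (qinv x) x = q1"
  by (simp add: qinv_def qmult_scale_left qmult_conj_left q1_def)

lemma qcancel: "qmult x c = 0 \<Longrightarrow> c \<noteq> 0 \<Longrightarrow> x = 0"
  by (metis qinv_right qmult_assoc qone(2) qmult_zero(1))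

lemma quat_decomp: "x = x$1 *\<^sub>R q1 + x$2 *\<^sub>R qi + x$3 *\<^sub>R qj + x$4 *\<^sub>R qk"
  by (simp add: quat_eq_iff q1_def qi_def qj_def qk_def)

lemma qtable:
  "qmult qi qi = - q1" "qmult qj qj = - q1" "qmult qk qk = - q1"
  "qmult qi qj = qk" "qmult qj qk = qi" "qmult qk qi = qj"
  "qmult qj qi = - qk" "qmult qk qj = - qi" "qmult qi qk = - qj"
  by (simp_all add: quat_eq_iff q1_def qi_def qj_def qk_def)



lemma qtable_r:
  "qmult qi (qmult qi y) = - y" "qmult qj (qmult qj y) = - y" "qmult qk (qmult qk y) = - y"
  "qmult qi (qmult qj y) = qmult qk y" "qmult qj (qmult qk y) = qmult qi y" "qmult qk (qmult qi y) = qmult qj y"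
  "qmult qj (qmult qi y) = - qmult qk y" "qmult qk (qmult qj y) = - qmult qi y" "qmult qi (qmult qk y) = - qmult qj y"
  by (simp_all add: qmult_assoc[symmetric] qtable qmult_lin)

lemma skolem_aux:
  fixes I J K x :: quat
  assumes t: "\<And>y. qmult I (qmult I y) = - y" "\<And>y. qmult J (qmult J y) = - y" "\<And>y. qmult K (qmult K y) = - y"
  "\<And>y. qmult I (qmult J y) = qmult K y" "\<And>y. qmult J (qmult K y) = qmult I y" "\<And>y. qmult K (qmult I y) = qmult J y"
  "\<And>y. qmult J (qmult I y) = - qmult K y" "\<And>y. qmult K (qmult J y) = - qmult I y" "\<And>y. qmult I (qmult K y) = - qmult J y"
  defines "w \<equiv> x - qmult I (qmult x qi) - qmult J (qmult x qj) - qmult K (qmult x qk)"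
  shows "qmult I w = qmult w qi" "qmult J w = qmult w qj" "qmult K w = qmult w qk"
  unfolding w_def by (simp_all add: qmult_lin qmult_assoc t qtable_r qtable algebra_simps)

lemma trace_aux:
  fixes I J K :: quat
  assumes "I$1 = 0" "J$1 = 0" "K$1 = 0"
  defines "w \<equiv> \<lambda>x. x - qmult I (qmult x qi) - qmult J (qmult x qj) - qmult K (qmult x qk)"
  shows "w q1 $ 1 + w qi $ 2 + w qj $ 3 + w qk $ 4 = 4"
  using assms by (simp add: q1_def qi_def qj_def qk_def)

lemma skolem:
  fixes I J K :: quat
  assumes pure: "I$1 = 0" "J$1 = 0" "K$1 = 0"
  and t: "\<And>y. qmult I (qmult I y) = - y" "\<And>y. qmult J (qmult J y) = - y" "\<And>y. qmult K (qmult K y) = - y"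
  "\<And>y. qmult I (qmult J y) = qmult K y" "\<And>y. qmult J (qmult K y) = qmult I y" "\<And>y. qmult K (qmult I y) = qmult J y"
  "\<And>y. qmult J (qmult I y) = - qmult K y" "\<And>y. qmult K (qmult J y) = - qmult I y" "\<And>y. qmult I (qmult K y) = - qmult J y"
  shows "\<exists>u. norm u = 1 \<and> qmult I u = qmult u qi \<and> qmult J u = qmult u qj \<and> qmult K u = qmult u qk"
proof -
  define w where "w = (\<lambda>x. x - qmult I (qmult x qi) - qmult J (qmult x qj) - qmult K (qmult x qk))"
  have tr: "w q1 $ 1 + w qi $ 2 + w qj $ 3 + w qk $ 4 = 4"
    using trace_aux[OF pure] by (simp add: w_def)
  have "\<exists>x. w x \<noteq> 0"
  proof (rule ccontr)
    assume "\<not> (\<exists>x. w x \<noteq> 0)"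
    then have "\<forall>x. w x = 0" by blast
    with tr show False by simp
  qed
  then obtain x where x: "w x \<noteq> 0" by blast
  have rel: "qmult I (w x) = qmult (w x) qi" "qmult J (w x) = qmult (w x) qj" "qmult K (w x) = qmult (w x) qk"
    using skolem_aux[OF t, of x] by (simp_all add: w_def)
  define u where "u = (1 / norm (w x)) *\<^sub>R w x"
  have "norm u = 1" using x by (simp add: u_def)
  moreover have "qmult I u = qmult u qi \<and> qmult J u = qmult u qj \<and> qmult K u = qmult u qk"
    by (simp add: u_def qmult_scale_left qmult_scale_right rel)
  ultimately show ?thesis by blast
qed



lemma imvec_nth [simp]: "imvec q $ 1 = q$2" "imvec q $ 2 = q$3" "imvec q $ 3 = q$4"
  by (simp_all add: imvec_def)
lemma imquat_nth [simp]: "imquat v $ 1 = 0" "imquat v $ 2 = v$1" "imquat v $ 3 = v$2" "imquat v $ 4 = v$3"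
  by (simp_all add: imquat_def)

lemma axis3 [simp]: "axis (1::3) (1::real) $ 1 = 1" "axis (1::3) (1::real) $ 2 = 0" "axis (1::3) (1::real) $ 3 = 0"
  "axis (2::3) (1::real) $ 1 = 0" "axis (2::3) (1::real) $ 2 = 1" "axis (2::3) (1::real) $ 3 = 0"
  "axis (3::3) (1::real) $ 1 = 0" "axis (3::3) (1::real) $ 2 = 0" "axis (3::3) (1::real) $ 3 = 1"
  by (simp_all add: axis_def)

lemma det_conj:
  fixes u :: quat
  shows "det (matrix (\<lambda>v. imvec (qmult (qmult u (imquat v)) (qconj u)))) = (norm u ^ 2) ^ 3"
  unfolding norm_quat_sq
  by (simp add: det_3 matrix_def) algebra



lemma bil_expand:
  fixes b :: "real^'n \<Rightarrow> real^'n \<Rightarrow> real"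
  assumes "bilinear b"
  shows "b x y = (\<Sum>l\<in>UNIV. \<Sum>k\<in>UNIV. x$l * y$k * b (axis l 1) (axis k 1))"
proof -
  have ex: "(\<Sum>i\<in>UNIV. z$i *\<^sub>R axis i 1) = z" for z :: "real^'n"
    using basis_expansion[of z] unfolding scalar_mult_eq_scaleR .
  have "b x y = b (\<Sum>i\<in>UNIV. x$i *\<^sub>R axis i 1) (\<Sum>i\<in>UNIV. y$i *\<^sub>R axis i 1)"
    by (simp only: ex)
  also have "\<dots> = (\<Sum>(l,k)\<in>UNIV \<times> UNIV. b (x$l *\<^sub>R axis l 1) (y$k *\<^sub>R axis k 1))"
    by (rule bilinear_sum[OF assms])
  also have "\<dots> = (\<Sum>(l,k)\<in>UNIV \<times> UNIV. x$l * y$k * b (axis l 1) (axis k 1))"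
    using assms by (simp add: bilinear_lmul bilinear_rmul mult.assoc)
  also have "\<dots> = (\<Sum>l\<in>UNIV. \<Sum>k\<in>UNIV. x$l * y$k * b (axis l 1) (axis k 1))"
    by (simp add: sum.cartesian_product)
  finally show ?thesis .
qed

lemma det_preserve:
  fixes f :: "real^'n \<Rightarrow> real^'n" and b :: "real^'n \<Rightarrow> real^'n \<Rightarrow> real"
  assumes bl: "bilinear b" and pos: "\<And>x. x \<noteq> 0 \<Longrightarrow> b x x > 0"
    and lf: "linear f" and pres: "\<And>x y. b (f x) (f y) = b x y"
  shows "det (matrix f) ^ 2 = 1"
proof -
  define G :: "real^'n^'n" where "G = (\<chi> i j. b (axis i 1) (axis j 1))"
  define M where "M = matrix f"
  have bexp: "b x y = (\<Sum>l\<in>UNIV. \<Sum>k\<in>UNIV. x$l * y$k * G$l$k)" for x y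
    using bil_expand[OF bl, of x y] by (simp add: G_def)
  have col: "f (axis i 1) $ l = M $ l $ i" for i l
    by (simp add: M_def matrix_def)
  have ent: "(transpose M ** G ** M) $ i $ j = G $ i $ j" for i j
  proof -
    have "G $ i $ j = b (f (axis i 1)) (f (axis j 1))" by (simp add: pres G_def)
    also have "\<dots> = (\<Sum>l\<in>UNIV. \<Sum>k\<in>UNIV. M $ l $ i * M $ k $ j * G$l$k)"
      by (simp add: bexp col)
    also have "\<dots> = (transpose M ** G ** M) $ i $ j"
      unfolding matrix_matrix_mult_def transpose_def
      by (simp add: sum_distrib_right mult.assoc mult.left_commute) (subst sum.swap, simp add: mult_ac)
    finally show ?thesis by simp
  qed
  have "transpose M ** G ** M = G" by (simp add: vec_eq_iff ent)
  then have "det M * det G * det M = det G"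
    by (metis det_mul det_transpose)
  moreover have "det G \<noteq> 0"
  proof
    assume "det G = 0"
    then have "\<not> inj (\<lambda>y. G *v y)"
      using det_nz_iff_inj[of "\<lambda>y. G *v y"] by simp
    then obtain y where y: "G *v y = 0" "y \<noteq> 0"
      using linear_inj_iff_eq_0[of "\<lambda>y. G *v y"] by auto
    have "b y y = (\<Sum>l\<in>UNIV. y$l * (G *v y)$l)"
      unfolding bexp matrix_vector_mult_def by (simp add: sum_distrib_left mult_ac)
    also have "\<dots> = 0" using y by simp
    finally show False using pos[OF y(2)] by simp
  qed
  ultimately show ?thesis by (simp add: M_def power2_eq_square)
qed



lemma linear_imvec: "linear imvec"
  by (rule linearI) (simp_all add: vec_eq_iff forall_3)
lemma linear_imquat: "linear imquat"
  by (rule linearI) (simp_all add: quat_eq_iff)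
lemma imquat_imvec: "q$1 = 0 \<Longrightarrow> imquat (imvec q) = q"
  by (simp add: quat_eq_iff)

lemma tab_gen:
  assumes "qmult X (qmult Y c) = qmult Z c" "c \<noteq> 0"
  shows "qmult X (qmult Y y) = qmult Z y"
proof -
  have "qmult (qmult X Y - Z) c = 0" using assms(1) by (simp add: qmult_lin qmult_assoc)
  then have "qmult X Y = Z" using qcancel assms(2) by fastforce
  then show ?thesis by (simp add: qmult_assoc[symmetric])
qed

theorem lemma1:
  fixes A :: "'p::finite \<Rightarrow> real^3 \<Rightarrow> quat"
    and g :: "(quat^'p \<Rightarrow> quat^'p) \<Rightarrow> (quat^'p \<Rightarrow> quat^'p) \<Rightarrow> real"
    and N :: "quat^'p \<Rightarrow> quat^'p"
    and \<phi> :: "real^3 \<Rightarrow> real^3"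
    and r s :: 'p
  assumes A_lin: "\<And>t. linear (A t)"
    and A_inj: "\<And>t. inj (A t)"
    and A_onto: "\<And>t. range (A t) = ImH"
    and g_bilin: "bilinear (\<lambda>Z W. g (Jmap A Z) (Jmap A W))"
    and g_sym: "\<And>Z W. g (Jmap A Z) (Jmap A W) = g (Jmap A W) (Jmap A Z)"
    and g_pos: "\<And>Z. Z \<noteq> 0 \<Longrightarrow> g (Jmap A Z) (Jmap A Z) > 0"
    and N_in: "N \<in> orth_normalizer A g"
    and phi_def: "\<And>Z. inv N \<circ> Jmap A Z \<circ> N = Jmap A (\<phi> Z)"
    and N_rs: "block N r s \<noteq> (\<lambda>q. 0)"
  shows "\<exists>w w'. norm w = 1 \<and> w' \<noteq> 0 \<and>
           (\<forall>q. block N r s q = qmult (qmult w q) w') \<and>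
           (\<forall>Z. qmult (qmult (qinv w) (A r Z)) w = A s (\<phi> Z)) \<and>
           det (matrix (\<lambda>v. imvec (A s (inv_into UNIV (A r) (imquat v))))) = det (matrix \<phi>) \<and>
           det (matrix \<phi>) \<in> {1, -1}"
proof -
  have ot: "orthogonal_transformation N" using N_in by (simp add: orth_normalizer_def)
  have linN: "linear N" using ot by (rule orthogonal_transformation_linear)
  have linIN: "linear (inv N)"
    using orthogonal_transformation_inv[OF ot] by (rule orthogonal_transformation_linear)
  have bijN: "bij N" using ot by (rule orthogonal_transformation_bij)
  have NinvN: "N (inv N y) = y" for y using bijN by (simp add: bij_is_surj surj_f_inv_f)
  have Jadd: "Jmap A (Z + W) x = Jmap A Z x + Jmap A W x" for Z W x
    by (simp add: Jmap_def vec_eq_iff linear_add[OF A_lin] qmult_add_left)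
  have Jscale: "Jmap A (c *\<^sub>R Z) x = c *\<^sub>R Jmap A Z x" for c Z x
    by (simp add: Jmap_def vec_eq_iff linear_scale[OF A_lin] qmult_scale_left)
  have Jinj: "Z = W" if "Jmap A Z = Jmap A W" for Z W
  proof -
    obtain t0 :: 'p where True by blast
    have "Jmap A Z (\<chi> t. q1) $ t0 = Jmap A W (\<chi> t. q1) $ t0" using that by simp
    then have "A t0 Z = A t0 W" by (simp add: Jmap_def)
    then show ?thesis using A_inj[of t0] by (simp add: inj_eq)
  qed
  have phiJ: "inv N (Jmap A Z (N x)) = Jmap A (\<phi> Z) x" for Z x
    using fun_cong[OF phi_def[of Z], of x] by simp
  have inter: "N (Jmap A (\<phi> Z) x) = Jmap A Z (N x)" for Z x
    by (metis phiJ NinvN)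
  have phi_lin: "linear \<phi>"
  proof (rule linearI)
    fix Z W
    show "\<phi> (Z + W) = \<phi> Z + \<phi> W"
    proof (rule Jinj, rule ext)
      fix x
      have "Jmap A (\<phi> (Z + W)) x = inv N (Jmap A Z (N x) + Jmap A W (N x))"
        by (simp add: phiJ[symmetric] Jadd)
      also have "\<dots> = Jmap A (\<phi> Z + \<phi> W) x"
        by (simp add: linear_add[OF linIN] phiJ Jadd)
      finally show "Jmap A (\<phi> (Z + W)) x = Jmap A (\<phi> Z + \<phi> W) x" .
    qed
  next
    fix c Z
    show "\<phi> (c *\<^sub>R Z) = c *\<^sub>R \<phi> Z"
    proof (rule Jinj, rule ext)
      fix x
      have "Jmap A (\<phi> (c *\<^sub>R Z)) x = inv N (c *\<^sub>R Jmap A Z (N x))"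
        by (simp add: phiJ[symmetric] Jscale)
      also have "\<dots> = Jmap A (c *\<^sub>R \<phi> Z) x"
        by (simp add: linear_scale[OF linIN] phiJ Jscale)
      finally show "Jmap A (\<phi> (c *\<^sub>R Z)) x = Jmap A (c *\<^sub>R \<phi> Z) x" .
    qed
  qed
  have conjJ: "N \<circ> Jmap A (\<phi> Z) \<circ> inv N = Jmap A Z" for Z
    by (rule ext) (simp add: inter NinvN)
  have bpres: "g (Jmap A (\<phi> Z)) (Jmap A (\<phi> W)) = g (Jmap A Z) (Jmap A W)" for Z W
  proof -
    have "Jmap A (\<phi> Z) \<in> Jspace A" "Jmap A (\<phi> W) \<in> Jspace A" by (simp_all add: Jspace_def)
    then have "g (N \<circ> Jmap A (\<phi> Z) \<circ> inv N) (N \<circ> Jmap A (\<phi> W) \<circ> inv N) = g (Jmap A (\<phi> Z)) (Jmap A (\<phi> W))"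
      using N_in unfolding orth_normalizer_def by blast
    then show ?thesis by (simp only: conjJ)
  qed
  have det2: "det (matrix \<phi>) ^ 2 = 1"
    using det_preserve[of "\<lambda>Z W. g (Jmap A Z) (Jmap A W)" \<phi>, OF g_bilin _ phi_lin] g_pos bpres by blast
  have detphi: "det (matrix \<phi>) \<in> {1, -1}" using det2 by (simp add: power2_eq_1_iff)
  have phi_inj: "inj \<phi>" using det2 det_nz_iff_inj[OF phi_lin] by auto
  have phi_surj: "surj \<phi>" by (simp add: linear_injective_imp_surjective phi_lin phi_inj)
  have pure: "q \<in> range (A t) \<longleftrightarrow> q$1 = 0" for q t
    using A_onto[of t] by (simp add: ImH_def)
  have hit: "\<exists>Z. A s (\<phi> Z) = e" if "e$1 = 0" for e
  proof -
    have "e \<in> range (A s)" using that pure[of e s] by simp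
    then obtain Y where "A s Y = e" by blast
    moreover obtain Z where "Y = \<phi> Z" using phi_surj by blast
    ultimately show ?thesis by blast
  qed
  have "qi$1 = 0" by (simp add: qi_def)
  then obtain Zi where Zi: "A s (\<phi> Zi) = qi" using hit by blast
  have "qj$1 = 0" by (simp add: qj_def)
  then obtain Zj where Zj: "A s (\<phi> Zj) = qj" using hit by blast
  have "qk$1 = 0" by (simp add: qk_def)
  then obtain Zk where Zk: "A s (\<phi> Zk) = qk" using hit by blast
  define I where "I = A r Zi"
  define J where "J = A r Zj"
  define K where "K = A r Zk"
  have pI: "I$1 = 0" "J$1 = 0" "K$1 = 0" using pure by (auto simp: I_def J_def K_def)
  define T where "T = block N r s"
  have linT: "linear T"
  proof (rule linearI)
    fix x y
    have "(\<chi> t. if t = s then x + y else 0) = (\<chi> t. if t = s then x else 0) + (\<chi> t. if t = s then y else (0::quat))"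
      by (simp add: vec_eq_iff)
    then show "T (x + y) = T x + T y" by (simp add: T_def block_def linear_add[OF linN])
  next
    fix c x
    have "(\<chi> t. if t = s then c *\<^sub>R x else 0) = c *\<^sub>R (\<chi> t. if t = s then x else (0::quat))"
      by (simp add: vec_eq_iff)
    then show "T (c *\<^sub>R x) = c *\<^sub>R T x" by (simp add: T_def block_def linear_scale[OF linN])
  qed
  have blockrel: "T (qmult (A s (\<phi> Z)) q) = qmult (A r Z) (T q)" for Z q
  proof -
    have "Jmap A (\<phi> Z) (\<chi> t. if t = s then q else 0) = (\<chi> t. if t = s then qmult (A s (\<phi> Z)) q else 0)"
      by (simp add: Jmap_def vec_eq_iff)
    then show ?thesis
      using inter[of Z "\<chi> t. if t = s then q else 0"]
      by (simp add: T_def block_def Jmap_def)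
  qed
  have TI: "T (qmult qi q) = qmult I (T q)" for q using blockrel[of Zi q] by (simp add: Zi I_def)
  have TJ: "T (qmult qj q) = qmult J (T q)" for q using blockrel[of Zj q] by (simp add: Zj J_def)
  have TK: "T (qmult qk q) = qmult K (T q)" for q using blockrel[of Zk q] by (simp add: Zk K_def)
  define c where "c = T q1"
  have Tq1: "T q1 = c" by (simp add: c_def)
  have Ti: "T qi = qmult I c" using TI[of q1] by (simp add: c_def)
  have Tj: "T qj = qmult J c" using TJ[of q1] by (simp add: c_def)
  have Tk: "T qk = qmult K c" using TK[of q1] by (simp add: c_def)
  have Tdec: "T q = q$1 *\<^sub>R c + q$2 *\<^sub>R qmult I c + q$3 *\<^sub>R qmult J c + q$4 *\<^sub>R qmult K c" for q
  proof -
    have "T q = T (q$1 *\<^sub>R q1 + q$2 *\<^sub>R qi + q$3 *\<^sub>R qj + q$4 *\<^sub>R qk)"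
      by (simp only: quat_decomp[of q, symmetric])
    then show ?thesis
      by (simp add: linear_add[OF linT] linear_scale[OF linT] Ti Tj Tk c_def)
  qed
  have c0: "c \<noteq> 0"
  proof
    assume "c = 0"
    then have "T q = 0" for q by (simp add: Tdec)
    then show False using N_rs by (auto simp: T_def)
  qed
  have Tneg: "T (- x) = - T x" for x by (rule linear_neg[OF linT])
  have t: "\<And>y. qmult I (qmult I y) = - y" "\<And>y. qmult J (qmult J y) = - y" "\<And>y. qmult K (qmult K y) = - y"
  "\<And>y. qmult I (qmult J y) = qmult K y" "\<And>y. qmult J (qmult K y) = qmult I y" "\<And>y. qmult K (qmult I y) = qmult J y"
  "\<And>y. qmult J (qmult I y) = - qmult K y" "\<And>y. qmult K (qmult J y) = - qmult I y" "\<And>y. qmult I (qmult K y) = - qmult J y"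
  proof -
    have e1: "qmult I (qmult I c) = qmult (- q1) c" using TI[of qi] by (simp add: qtable Ti Tneg Tq1 qmult_neg_left)
    have e2: "qmult J (qmult J c) = qmult (- q1) c" using TJ[of qj] by (simp add: qtable Tj Tneg Tq1 qmult_neg_left)
    have e3: "qmult K (qmult K c) = qmult (- q1) c" using TK[of qk] by (simp add: qtable Tk Tneg Tq1 qmult_neg_left)
    have e4: "qmult I (qmult J c) = qmult K c" using TI[of qj] by (simp add: qtable Tq1 Tj Tk)
    have e5: "qmult J (qmult K c) = qmult I c" using TJ[of qk] by (simp add: qtable Tq1 Tk Ti)
    have e6: "qmult K (qmult I c) = qmult J c" using TK[of qi] by (simp add: qtable Tq1 Ti Tj)
    have e7: "qmult J (qmult I c) = qmult (- K) c" using TJ[of qi] by (simp add: qtable Tq1 Ti Tk Tneg qmult_neg_left)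
    have e8: "qmult K (qmult J c) = qmult (- I) c" using TK[of qj] by (simp add: qtable Tq1 Tj Ti Tneg qmult_neg_left)
    have e9: "qmult I (qmult K c) = qmult (- J) c" using TI[of qk] by (simp add: qtable Tq1 Tk Tj Tneg qmult_neg_left)
    fix y
    show "qmult I (qmult I y) = - y" using tab_gen[OF e1 c0, of y] by (simp add: qmult_neg_left)
    show "qmult J (qmult J y) = - y" using tab_gen[OF e2 c0, of y] by (simp add: qmult_neg_left)
    show "qmult K (qmult K y) = - y" using tab_gen[OF e3 c0, of y] by (simp add: qmult_neg_left)
    show "qmult I (qmult J y) = qmult K y" using tab_gen[OF e4 c0, of y] by simp
    show "qmult J (qmult K y) = qmult I y" using tab_gen[OF e5 c0, of y] by simp
    show "qmult K (qmult I y) = qmult J y" using tab_gen[OF e6 c0, of y] by simp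
    show "qmult J (qmult I y) = - qmult K y" using tab_gen[OF e7 c0, of y] by (simp add: qmult_neg_left)
    show "qmult K (qmult J y) = - qmult I y" using tab_gen[OF e8 c0, of y] by (simp add: qmult_neg_left)
    show "qmult I (qmult K y) = - qmult J y" using tab_gen[OF e9 c0, of y] by (simp add: qmult_neg_left)
  qed
  obtain u where u1: "norm u = 1" and uI: "qmult I u = qmult u qi" and uJ: "qmult J u = qmult u qj"
    and uK: "qmult K u = qmult u qk"
    using skolem[OF pI t] by blast
  have u0: "u \<noteq> 0" using u1 by auto
  have qinvu: "qinv u = qconj u" using u1 by (simp add: qinv_def)
  have hinv: "qmult (qinv u) (qmult u y) = y" for y by (simp add: qmult_assoc[symmetric] qinv_left[OF u0])
  have hinv2: "qmult u (qmult (qinv u) y) = y" for y by (simp add: qmult_assoc[symmetric] qinv_right[OF u0])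
  define w' where "w' = qmult (qinv u) c"
  have cw: "qmult u w' = c" by (simp add: w'_def hinv2)
  have w'0: "w' \<noteq> 0" using cw c0 by auto
  have EI: "qmult I c = qmult u (qmult qi w')"
    by (simp add: cw[symmetric] qmult_assoc[symmetric] uI)
  have EJ: "qmult J c = qmult u (qmult qj w')"
    by (simp add: cw[symmetric] qmult_assoc[symmetric] uJ)
  have EK: "qmult K c = qmult u (qmult qk w')"
    by (simp add: cw[symmetric] qmult_assoc[symmetric] uK)
  have blk: "T q = qmult (qmult u q) w'" for q
  proof -
    have "qmult (qmult u q) w' = qmult (qmult u (q$1 *\<^sub>R q1 + q$2 *\<^sub>R qi + q$3 *\<^sub>R qj + q$4 *\<^sub>R qk)) w'"
      by (simp only: quat_decomp[of q, symmetric])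
    also have "\<dots> = T q" by (simp add: Tdec qmult_lin qmult_assoc EI EJ EK cw)
    finally show ?thesis by simp
  qed
  have conjZ: "qmult (qmult (qinv u) (A r Z)) u = A s (\<phi> Z)" for Z
  proof -
    define a where "a = A s (\<phi> Z)"
    have a1: "a$1 = 0" using pure[of a s] by (auto simp: a_def)
    have adec: "a = a$2 *\<^sub>R qi + a$3 *\<^sub>R qj + a$4 *\<^sub>R qk"
      using a1 by (simp add: quat_eq_iff qi_def qj_def qk_def)
    define Z' where "Z' = a$2 *\<^sub>R Zi + a$3 *\<^sub>R Zj + a$4 *\<^sub>R Zk"
    have "A s (\<phi> Z') = a$2 *\<^sub>R qi + a$3 *\<^sub>R qj + a$4 *\<^sub>R qk"
      by (simp add: Z'_def linear_add[OF phi_lin] linear_scale[OF phi_lin]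
          linear_add[OF A_lin] linear_scale[OF A_lin] Zi Zj Zk)
    then have "A s (\<phi> Z') = A s (\<phi> Z)" using adec by (simp add: a_def)
    then have "Z' = Z" using A_inj[of s] phi_inj by (simp add: inj_eq)
    then have ZZ: "Z = a$2 *\<^sub>R Zi + a$3 *\<^sub>R Zj + a$4 *\<^sub>R Zk" by (simp add: Z'_def)
    have ArZ: "A r Z = a$2 *\<^sub>R I + a$3 *\<^sub>R J + a$4 *\<^sub>R K"
      by (subst ZZ) (simp add: linear_add[OF A_lin] linear_scale[OF A_lin] I_def J_def K_def)
    have "qmult (qmult (qinv u) (A r Z)) u = a$2 *\<^sub>R qi + a$3 *\<^sub>R qj + a$4 *\<^sub>R qk"
      by (simp add: ArZ qmult_lin qmult_assoc uI uJ uK hinv)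
    then show ?thesis using adec by (simp add: a_def)
  qed
  define B where "B = (\<lambda>t v. imvec (A t v))"
  have linB: "linear (B t)" for t
    using linear_compose[OF A_lin linear_imvec] by (simp add: B_def o_def)
  have AB: "imquat (B t v) = A t v" for t v
    using pure[of "A t v" t] by (simp add: B_def imquat_imvec)
  have AB': "imquat (imvec (A t v)) = A t v" for t v
    using AB[of t v] by (simp add: B_def)
  have injB: "inj (B t)" for t
  proof (rule injI)
    fix x y assume "B t x = B t y"
    then have "A t x = A t y" by (metis AB)
    then show "x = y" using A_inj[of t] by (simp add: inj_eq)
  qed
  define C where "C = (\<lambda>v. imvec (qmult (qmult u (imquat v)) (qconj u)))"
  have linC: "linear C"
    by (rule linearI) (simp_all add: C_def linear_add[OF linear_imquat] linear_scale[OF linear_imquat]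
        qmult_lin linear_add[OF linear_imvec] linear_scale[OF linear_imvec])
  have detC: "det (matrix C) = 1" using det_conj[of u] u1 by (simp add: C_def)
  have key1: "B r = C \<circ> B s \<circ> \<phi>"
  proof
    fix Z
    have "qmult (qmult u (A s (\<phi> Z))) (qinv u) = A r Z"
      by (simp add: conjZ[symmetric] qmult_assoc hinv2 qinv_right[OF u0])
    then show "B r Z = (C \<circ> B s \<circ> \<phi>) Z" by (simp add: C_def AB' qinvu B_def)
  qed
  define F where "F = (\<lambda>v. imvec (A s (inv_into UNIV (A r) (imquat v))))"
  have key2: "F (B r Z) = B s Z" for Z
    by (simp add: F_def AB' inv_into_f_f[OF A_inj] B_def)
  have surjB: "surj (B r)" by (simp add: linear_injective_imp_surjective linB injB)
  have Finv: "F = B s \<circ> inv (B r)"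
  proof
    fix v
    obtain Z where "v = B r Z" using surjB by blast
    then show "F v = (B s \<circ> inv (B r)) v" by (simp add: key2 inv_f_f[OF injB])
  qed
  have linF: "linear F"
    unfolding Finv by (rule linear_compose[OF inj_linear_imp_inv_linear[OF linB injB] linB])
  have m1: "matrix (B s) = matrix F ** matrix (B r)"
    using matrix_compose[OF linB linF, of r] key2 by (metis comp_apply ext)
  have m2: "matrix (B r) = matrix C ** matrix (B s) ** matrix \<phi>"
    using matrix_compose[OF phi_lin linear_compose[OF linB linC]] matrix_compose[OF linB linC, of s]
    by (simp add: key1)
  have "det (matrix (B s)) = det (matrix F ** (matrix C ** matrix (B s) ** matrix \<phi>))"
    using m1 m2 by simp
  also have "\<dots> = det (matrix F) * (det (matrix C) * det (matrix (B s)) * det (matrix \<phi>))"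
    by (simp only: det_mul)
  finally have "det (matrix (B s)) = det (matrix F) * (det (matrix (B s)) * det (matrix \<phi>))"
    by (simp add: detC)
  moreover have "det (matrix (B s)) \<noteq> 0" using det_nz_iff_inj[OF linB] injB by simp
  ultimately have "det (matrix F) * det (matrix \<phi>) = 1"
    by (metis mult.assoc mult.commute mult_cancel_left2)
  then have "det (matrix F) = det (matrix \<phi>)" using detphi by auto
  then show ?thesis
    using u1 w'0 blk conjZ detphi by (auto simp: T_def F_def)
qed

end
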